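(* Let $\nu\in\mathbb{R}$. Define polynomials $\tilde F_s(\beta)$, $s=1,2,3,\ldots$, by $$\tilde F_1(\beta)=\tfrac18(4\nu^2-1)(\beta^2-1),\qquad \tilde F_2(\beta)=\tfrac18(4\nu^2-1)\beta(\beta^2-1),$$ $$\tilde F_{s+1}(\beta)=\tfrac12(\beta^2-1)\frac{d\tilde F_s(\beta)}{d\beta}-\tfrac12\sum_{j=1}^{s-1}\tilde F_j(\beta)\tilde F_{s-j}(\beta)\quad(s=2,3,4,\ldots),$$ and polynomials $\tilde E_s(\beta)=-\int_0^\beta \frac{\tilde F_s(b)}{b^2-1}\,db$ ($s=1,2,3,\ldots$). Regarded as functions of $z$ via $\beta=z/\sqrt{z^2-1}$, the functions $(z-1)^{1/2}\tilde E_{2s-1}(\beta)$ and $\tilde E_{2s}(\beta)$ ($s=1,2,3,\ldots$) are meromorphic functions at $z=1$.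
   Context: The square roots $\sqrt{z^2-1}$ and $(z-1)^{1/2}$ are taken with principal branches in the $z$-plane cut along $(-\infty,1]$. (Each $\tilde F_s$ vanishes at $\beta=\pm1$, so $\tilde E_s$ is a polynomial.) *)

theory Defs
  imports "HOL-Complex_Analysis.Complex_Analysis" "HOL-Computational_Algebra.Polynomial"
begin

function Ftil :: "real \<Rightarrow> nat \<Rightarrow> complex poly" where
  "Ftil \<nu> 0 = 0"
| "Ftil \<nu> (Suc 0) = smult (complex_of_real ((4 * \<nu>^2 - 1) / 8)) [:-1, 0, 1:]"
| "Ftil \<nu> (Suc (Suc 0)) = smult (complex_of_real ((4 * \<nu>^2 - 1) / 8)) ([:0, 1:] * [:-1, 0, 1:])"
| "Ftil \<nu> (Suc (Suc (Suc n))) =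
     smult (1/2) ([:-1, 0, 1:] * pderiv (Ftil \<nu> (Suc (Suc n))))
     - smult (1/2) (\<Sum>j\<in>{1..Suc n}. Ftil \<nu> j * Ftil \<nu> (Suc (Suc n) - j))"
  by pat_completeness auto
termination
  by (relation "Wellfounded.measure (\<lambda>(\<nu>, s). s)") auto

text \<open>E~_s(beta) = - integral from 0 to beta of F~_s(b)/(b^2-1) db, along the straight segment
  (the integrand has only removable singularities, since F~_s vanishes at +-1).\<close>

definition Etil :: "real \<Rightarrow> nat \<Rightarrow> complex \<Rightarrow> complex" where
  "Etil \<nu> s \<beta> = - contour_integral (linepath 0 \<beta>) (\<lambda>b. poly (Ftil \<nu> s) b / (b^2 - 1))"

text \<open>Principal branch of sqrt(z^2-1) in the plane cut along (-infinity,1]: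
  sqrt(z-1) * sqrt(z+1) with principal square roots.\<close>

definition sqrt_z2m1 :: "complex \<Rightarrow> complex" where
  "sqrt_z2m1 z = csqrt (z - 1) * csqrt (z + 1)"

definition beta_of :: "complex \<Rightarrow> complex" where
  "beta_of z = z / sqrt_z2m1 z"

definition cut_set :: "complex set" where
  "cut_set = {z. Im z = 0 \<and> Re z \<le> 1}"

definition meromorphic_at_cut :: "(complex \<Rightarrow> complex) \<Rightarrow> complex \<Rightarrow> bool" where
  "meromorphic_at_cut f z0 \<longleftrightarrow>
     (\<exists>g. g meromorphic_on {z0} \<and> (\<forall>\<^sub>F z in at z0. z \<notin> cut_set \<longrightarrow> g z = f z))"

end

theory Submission
  imports Defs
begin

definition par :: "nat \<Rightarrow> complex poly \<Rightarrow> bool" where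
  "par k p \<longleftrightarrow> (\<forall>i. coeff p i \<noteq> 0 \<longrightarrow> even i = even k)"

lemma par_cong: "even a = even b \<Longrightarrow> par a p \<Longrightarrow> par b p"
  by (simp add: par_def)

lemma par_zero [simp]: "par k 0"
  by (simp add: par_def)

lemma par_add: "par k p \<Longrightarrow> par k q \<Longrightarrow> par k (p + q)"
  unfolding par_def by (metis add.right_neutral coeff_add)

lemma par_diff: "par k p \<Longrightarrow> par k q \<Longrightarrow> par k (p - q)"
  unfolding par_def by (metis diff_zero coeff_diff)

lemma par_smult: "par k p \<Longrightarrow> par k (smult c p)"
  by (auto simp: par_def)

lemma par_mult: "par a p \<Longrightarrow> par b q \<Longrightarrow> par (a + b) (p * q)"
proof -
  assume pa: "par a p" and pb: "par b q"
  show ?thesis unfolding par_def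
  proof (intro allI impI)
    fix n assume "coeff (p * q) n \<noteq> 0"
    then have "(\<Sum>i\<le>n. coeff p i * coeff q (n-i)) \<noteq> 0" by (simp add: coeff_mult)
    then obtain i where i: "i \<le> n" "coeff p i * coeff q (n-i) \<noteq> 0"
      by (metis (no_types, lifting) atMost_iff sum.neutral)
    then have "even i = even a" "even (n - i) = even b" using pa pb by (auto simp: par_def)
    then show "even n = even (a + b)" using i(1)
      by (metis add_diff_inverse_nat even_add not_le)
  qed
qed

lemma par_sum: "(\<And>x. x \<in> A \<Longrightarrow> par k (f x)) \<Longrightarrow> par k (sum f A)"
proof (induction A rule: infinite_finite_induct)
  case (insert x F)
  then show ?case by (simp add: par_add)
qed auto

lemma par_pderiv: "par k p \<Longrightarrow> par (Suc k) (pderiv p)"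
  by (auto simp: par_def coeff_pderiv)

lemma par_const: "par 0 [:c:]"
  by (auto simp: par_def coeff_pCons split: nat.splits)

lemma par_X: "par 1 [:0, 1:]"
  by (auto simp: par_def coeff_pCons split: nat.splits)

lemma par_q: "par 0 [:-1, 0, 1:]"
  by (auto simp: par_def coeff_pCons split: nat.splits)

function Gtil :: "real \<Rightarrow> nat \<Rightarrow> complex poly" where
  "Gtil \<nu> 0 = 0"
| "Gtil \<nu> (Suc 0) = [:complex_of_real ((4 * \<nu>^2 - 1) / 8):]"
| "Gtil \<nu> (Suc (Suc 0)) = smult (complex_of_real ((4 * \<nu>^2 - 1) / 8)) [:0, 1:]"
| "Gtil \<nu> (Suc (Suc (Suc n))) =
     [:0, 1:] * Gtil \<nu> (Suc (Suc n)) + smult (1/2) ([:-1, 0, 1:] * pderiv (Gtil \<nu> (Suc (Suc n))))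
     - smult (1/2) ([:-1, 0, 1:] * (\<Sum>j\<in>{1..Suc n}. Gtil \<nu> j * Gtil \<nu> (Suc (Suc n) - j)))"
  by pat_completeness auto
termination
  by (relation "Wellfounded.measure (\<lambda>(\<nu>, s). s)") auto

lemma key: fixes q X G D S :: "complex poly"
  shows "smult (1/2) (q * (q * D + G * smult 2 X)) - smult (1/2) (q*q*S) = q * (X*G + smult (1/2) (q * D) - smult (1/2) (q*S))"
  by (simp add: algebra_simps smult_add_right smult_diff_right mult_smult_right)

lemma par_X': "par 3 [:0, c:]"
  by (auto simp: par_def coeff_pCons split: nat.splits)

lemma F_eq: "Ftil \<nu> n = [:-1, 0, 1:] * Gtil \<nu> n"
proof (induction n rule: less_induct)
  case (less n)
  consider "n = 0" | "n = 1" | "n = 2" | m where "n = Suc (Suc (Suc m))"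
    by (metis One_nat_def Suc_1 not0_implies_Suc)
  then show ?case
  proof cases
    case 4
    let ?q = "[:-1, 0, 1:] :: complex poly"
    have s: "(\<Sum>j\<in>{1..Suc m}. Ftil \<nu> j * Ftil \<nu> (Suc (Suc m) - j))
        = ?q * ?q * (\<Sum>j\<in>{1..Suc m}. Gtil \<nu> j * Gtil \<nu> (Suc (Suc m) - j))"
      unfolding sum_distrib_left
    proof (rule sum.cong)
      fix x assume x: "x \<in> {1..Suc m}"
      have "x < n" "Suc (Suc m) - x < n" using x 4 by auto
      then have "Ftil \<nu> x = ?q * Gtil \<nu> x" "Ftil \<nu> (Suc (Suc m) - x) = ?q * Gtil \<nu> (Suc (Suc m) - x)"
        using less.IH by blast+
      then show "Ftil \<nu> x * Ftil \<nu> (Suc (Suc m) - x) = ?q * ?q * (Gtil \<nu> x * Gtil \<nu> (Suc (Suc m) - x))"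
        by (simp only: ac_simps)
    qed simp
    have d: "Ftil \<nu> (Suc (Suc m)) = ?q * Gtil \<nu> (Suc (Suc m))" using 4 less by auto
    have pq: "pderiv ?q = smult 2 [:0, 1:]" by (simp add: pderiv_pCons)
    show ?thesis unfolding 4 Ftil.simps(4) s d pderiv_mult pq Gtil.simps(4)
      by (rule key)
  qed (auto simp: numeral_2_eq_2 mult.commute)
qed

lemma par_G: "par (Suc n) (Gtil \<nu> n)"
proof (induction n rule: less_induct)
  case (less n)
  consider "n = 0" | "n = 1" | "n = 2" | m where "n = Suc (Suc (Suc m))"
    by (metis One_nat_def Suc_1 not0_implies_Suc)
  then show ?case
  proof cases
    case 1 then show ?thesis by simp
  next
    case 2 then show ?thesis using par_const by (auto intro: par_cong)
  next
    case 3 then show ?thesis using par_X' by (simp add: numeral_2_eq_2 numeral_3_eq_3)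
  next
    case 4
    have IH: "par (Suc (Suc (Suc m))) (Gtil \<nu> (Suc (Suc m)))" using less 4 by auto
    have a: "par (Suc n) ([:0, 1:] * Gtil \<nu> (Suc (Suc m)))"
      by (rule par_cong[OF _ par_mult[OF par_X IH]]) (simp add: 4)
    have b: "par (Suc n) ([:-1, 0, 1:] * pderiv (Gtil \<nu> (Suc (Suc m))))"
      by (rule par_cong[OF _ par_mult[OF par_q par_pderiv[OF IH]]]) (simp add: 4)
    have c: "par (Suc n) ([:-1, 0, 1:] * (\<Sum>j\<in>{1..Suc m}. Gtil \<nu> j * Gtil \<nu> (Suc (Suc m) - j)))"
    proof (rule par_cong[OF _ par_mult[OF par_q par_sum]])
      fix j assume j: "j \<in> {1..Suc m}"
      have "par (Suc j + Suc (Suc (Suc m) - j)) (Gtil \<nu> j * Gtil \<nu> (Suc (Suc m) - j))"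
        by (rule par_mult) (use less 4 j in auto)
      then show "par (Suc n) (Gtil \<nu> j * Gtil \<nu> (Suc (Suc m) - j))"
        by (rule par_cong[rotated]) (use 4 j in auto)
    qed simp
    show ?thesis unfolding 4 Gtil.simps
      by (intro par_diff par_add par_smult) (use a b c 4 in auto)
  qed
qed


definition antider :: "complex poly \<Rightarrow> complex poly" where
  "antider p = Abs_poly (\<lambda>i. if i \<le> degree p + 1 then (if i = 0 then 0 else coeff p (i - 1) / of_nat i) else 0)"

lemma coeff_antider: "coeff (antider p) i = (if i = 0 then 0 else coeff p (i - 1) / of_nat i)"
  unfolding antider_def coeff_Abs_poly_If_le by (auto simp: coeff_eq_0)

lemma pderiv_antider: "pderiv (antider p) = p"
  by (rule poly_eqI) (simp add: coeff_pderiv coeff_antider del: of_nat_Suc)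

lemma antider_0: "poly (antider p) 0 = 0"
  by (simp add: poly_0_coeff_0 coeff_antider)

lemma par_antider: "par k p \<Longrightarrow> par (Suc k) (antider p)"
  by (auto simp: par_def coeff_antider split: if_splits)

lemma contour_F:
  fixes G :: "complex poly"
  shows "contour_integral (linepath 0 \<beta>) (\<lambda>b. poly ([:-1, 0, 1:] * G) b / (b^2 - 1)) = poly (antider G) \<beta>"
proof -
  have h1: "((\<lambda>b. poly G b) has_contour_integral (poly (antider G) \<beta> - poly (antider G) 0)) (linepath 0 \<beta>)"
    using contour_integral_primitive[of UNIV "poly (antider G)" "poly G" "linepath 0 \<beta>"]
    by (metis DERIV_subset pathfinish_linepath pathstart_linepath poly_DERIV pderiv_antider
        subset_UNIV valid_path_linepath)
  define S where "S = {Re (1 / \<beta>), Re (- 1 / \<beta>)}"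
  have fin: "finite S" by (simp add: S_def)
  have eq: "poly ([:-1, 0, 1:] * G) (linepath 0 \<beta> t) / ((linepath 0 \<beta> t)^2 - 1) * (\<beta> - 0)
      = poly G (linepath 0 \<beta> t) * (\<beta> - 0)" if t: "t \<in> {0..1} - S" for t
  proof -
    have lp: "linepath 0 \<beta> t = of_real t * \<beta>" by (simp add: linepath_def scaleR_conv_of_real)
    have ne: "(of_real t * \<beta>)^2 - 1 \<noteq> 0"
    proof
      assume "(of_real t * \<beta>)^2 - 1 = 0"
      then have "of_real t * \<beta> = 1 \<or> of_real t * \<beta> = -1"
        by (simp add: power2_eq_1_iff)
      moreover have b: "\<beta> \<noteq> 0" using calculation by auto
      ultimately have "complex_of_real t = 1 / \<beta> \<or> complex_of_real t = -1 / \<beta>"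
        by (metis eq_divide_eq)
      then have "t \<in> S" unfolding S_def by (metis Re_complex_of_real insertCI)
      then show False using t by auto
    qed
    have "poly [:-1, 0, 1:] (of_real t * \<beta>) = (of_real t * \<beta>)^2 - 1"
      by (simp add: power2_eq_square)
    then show ?thesis unfolding lp poly_mult using ne by (simp only:) (simp del: poly_pCons)
  qed
  have "((\<lambda>b. poly ([:-1, 0, 1:] * G) b / (b^2 - 1)) has_contour_integral (poly (antider G) \<beta> - poly (antider G) 0)) (linepath 0 \<beta>)"
    using h1 unfolding has_contour_integral_linepath
    by (rule has_integral_spike_finite[OF fin, rotated]) (rule eq)
  then show ?thesis using contour_integral_unique antider_0 by simp
qed


lemma E_eq: "Etil \<nu> s \<beta> = - poly (antider (Gtil \<nu> s)) \<beta>"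
  unfolding Etil_def F_eq contour_F ..

lemma beta_sq: "(beta_of z)^2 = z^2 / (z^2 - 1)"
proof -
  have "(z - 1) * (z + 1) = z^2 - 1" by (simp add: algebra_simps power2_eq_square)
  then show ?thesis
    unfolding beta_of_def sqrt_z2m1_def power_divide power_mult_distrib power2_csqrt by simp
qed

lemma sqrt_beta: "z \<noteq> 1 \<Longrightarrow> csqrt (z - 1) * beta_of z = z / csqrt (z + 1)"
  unfolding beta_of_def sqrt_z2m1_def by (simp add: field_simps)

lemma m1: "(\<lambda>z. z^2 / (z^2 - 1)) meromorphic_on {1}"
  by (intro meromorphic_intros)

lemma m2: "(\<lambda>z::complex. z / csqrt (z + 1)) meromorphic_on {1}"
  by (intro analytic_on_imp_meromorphic_on analytic_intros) (auto simp: complex_nonpos_Reals_iff)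

lemma one_cut: "z \<notin> cut_set \<Longrightarrow> z \<noteq> 1"
  by (auto simp: cut_set_def)

lemma odd_part:
  assumes "par 1 Q"
  shows "meromorphic_at_cut (\<lambda>z. csqrt (z - 1) * (- poly Q (beta_of z))) 1"
  unfolding meromorphic_at_cut_def
proof (intro exI conjI)
  let ?g = "\<lambda>z. - (\<Sum>i\<le>degree Q. coeff Q i * (z / csqrt (z + 1) * (z^2 / (z^2 - 1)) ^ (i div 2)))"
  show "?g meromorphic_on {1}"
    by (intro meromorphic_intros m1 m2)
  show "\<forall>\<^sub>F z in at 1. z \<notin> cut_set \<longrightarrow> ?g z = csqrt (z - 1) * (- poly Q (beta_of z))"
  proof (intro always_eventually allI impI)
    fix z assume z: "z \<notin> cut_set"
    have "csqrt (z - 1) * coeff Q i * beta_of z ^ i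
        = coeff Q i * (z / csqrt (z + 1) * (z^2 / (z^2 - 1)) ^ (i div 2))" for i
    proof (cases "coeff Q i = 0")
      case False
      then have "odd i" using assms by (auto simp: par_def)
      then have "i = Suc (2 * (i div 2))" by presburger
      then have "beta_of z ^ i = beta_of z * (beta_of z ^ 2) ^ (i div 2)"
        by (metis power_Suc power_mult)
      then have "csqrt (z - 1) * coeff Q i * beta_of z ^ i
          = coeff Q i * ((csqrt (z - 1) * beta_of z) * (beta_of z ^ 2) ^ (i div 2))"
        by (simp add: ac_simps)
      then show ?thesis by (simp only: sqrt_beta[OF one_cut[OF z]] beta_sq)
    qed simp
    then show "?g z = csqrt (z - 1) * (- poly Q (beta_of z))"
      by (simp add: poly_altdef sum_distrib_left mult.assoc)
  qed
qed

lemma even_part: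
  assumes "par 0 Q"
  shows "meromorphic_at_cut (\<lambda>z. - poly Q (beta_of z)) 1"
  unfolding meromorphic_at_cut_def
proof (intro exI conjI)
  let ?g = "\<lambda>z. - (\<Sum>i\<le>degree Q. coeff Q i * (z^2 / (z^2 - 1)) ^ (i div 2))"
  show "?g meromorphic_on {1}"
    by (intro meromorphic_intros m1)
  show "\<forall>\<^sub>F z in at 1. z \<notin> cut_set \<longrightarrow> ?g z = - poly Q (beta_of z)"
  proof (intro always_eventually allI impI)
    fix z assume z: "z \<notin> cut_set"
    have t: "coeff Q i * beta_of z ^ i = coeff Q i * (z^2 / (z^2 - 1)) ^ (i div 2)" for i
    proof (cases "coeff Q i = 0")
      case False
      then have "even i" using assms by (auto simp: par_def)
      then have "i = 2 * (i div 2)" by presburger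
      then have "beta_of z ^ i = (beta_of z ^ 2) ^ (i div 2)"
        by (metis power_mult)
      then show ?thesis by (simp add: beta_sq)
    qed simp
    show "?g z = - poly Q (beta_of z)"
      unfolding poly_altdef by (simp only: t)
  qed
qed

theorem lemma2p1:
  fixes \<nu> :: real and s :: nat
  assumes "s \<ge> 1"
  shows "meromorphic_at_cut (\<lambda>z. csqrt (z - 1) * Etil \<nu> (2 * s - 1) (beta_of z)) 1
       \<and> meromorphic_at_cut (\<lambda>z. Etil \<nu> (2 * s) (beta_of z)) 1"
proof
  have "par 1 (antider (Gtil \<nu> (2 * s - 1)))"
    by (rule par_cong[OF _ par_antider[OF par_G]]) (use assms in auto)
  then show "meromorphic_at_cut (\<lambda>z. csqrt (z - 1) * Etil \<nu> (2 * s - 1) (beta_of z)) 1"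
    unfolding E_eq by (rule odd_part)
  have "par 0 (antider (Gtil \<nu> (2 * s)))"
    by (rule par_cong[OF _ par_antider[OF par_G]]) auto
  then show "meromorphic_at_cut (\<lambda>z. Etil \<nu> (2 * s) (beta_of z)) 1"
    unfolding E_eq by (rule even_part)
qed

end
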